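(* Let $m,n$ be natural numbers with $\min\{m,n\}\ge4$, let $\{|e_i\rangle\}_{i=0}^{m-1}$ and $\{|f_j\rangle\}_{j=0}^{n-1}$ be the canonical bases of $\mathbb{C}^m$ and $\mathbb{C}^n$, and let $a\in\mathbb{R}$. Define subspaces of $\mathbb{C}^m\otimes\mathbb{C}^n$: $$\mathcal{T}=\mathrm{span}\{|e_{i-2}\rangle\otimes|f_{j+1}\rangle+(a+1)|e_{i-1}\rangle\otimes|f_j\rangle+(a+1)|e_i\rangle\otimes|f_{j-1}\rangle+|e_{i+1}\rangle\otimes|f_{j-2}\rangle:\ 2\le i\le m-2,\ 2\le j\le n-2\},$$ $$\mathcal{S}=\mathrm{span}\{|e_{i-1}\rangle\otimes|f_{j+1}\rangle+a|e_i\rangle\otimes|f_j\rangle+|e_{i+1}\rangle\otimes|f_{j-1}\rangle:\ 1\le i\le m-2,\ 1\le j\le n-2\}.$$ Then: (1) $\mathcal{T}\subset\mathcal{S}$; (2) if $|a|\ge2$, then $\mathcal{S}$ does not contain any non-zero vector of Schmidt rank $\le2$, and $\dim\mathcal{S}=(m-2)(n-2)$; (3) if $a>4$, then $\mathcal{T}$ does not contain any non-zero vector of Schmidt rank $\le3$, and $\dim\mathcal{T}=(m-3)(n-3)$; (4) if $a>4$, then there is at least one vector of Schmidt rank $3$ in $\mathcal{S}\setminus\mathcal{T}$.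
   Context: The Schmidt rank of $|\psi\rangle=\sum_{i,j}c_{ij}|e_i\rangle\otimes|f_j\rangle\in\mathbb{C}^m\otimes\mathbb{C}^n$ is the minimal number of terms in a decomposition $|\psi\rangle=\sum_{l=1}^r|u_l\rangle\otimes|v_l\rangle$; equivalently, the rank of the matrix $[c_{ij}]$. (The paper presents $\mathcal{T}$ and $\mathcal{S}$ as direct sums over anti-diagonal index $d$ of the spans of generators with $i+j=d+1$, respectively $i+j=d$; these are the same subspaces.) *)

theory Defs
  imports Complex_Main "HOL-Library.Function_Algebras"
begin

text \<open>A vector of C^m (x) C^n is represented by its coefficient array
  c :: nat => nat => complex, where c i j is the coefficient of e_i (x) f_j
  (only 0 <= i < m, 0 <= j < n are relevant; all vectors considered vanish outside).\<close>

type_synonym tensor = "nat \<Rightarrow> nat \<Rightarrow> complex"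

definition tscale :: "complex \<Rightarrow> tensor \<Rightarrow> tensor" where
  "tscale c x = (\<lambda>i j. c * x i j)"

definition ket :: "nat \<Rightarrow> nat \<Rightarrow> tensor" where
  "ket i j = (\<lambda>p q. if p = i \<and> q = j then 1 else 0)"

definition cspan :: "tensor set \<Rightarrow> tensor set" where
  "cspan S = module.span tscale S"

definition cdim :: "tensor set \<Rightarrow> nat" where
  "cdim S = vector_space.dim tscale S"

definition schmidt_rank :: "nat \<Rightarrow> nat \<Rightarrow> tensor \<Rightarrow> nat" where
  "schmidt_rank m n psi = (LEAST r. \<exists>u v :: nat \<Rightarrow> nat \<Rightarrow> complex.
      \<forall>i<m. \<forall>j<n. psi i j = (\<Sum>l<r. u l i * v l j))"

definition T_gen :: "real \<Rightarrow> nat \<Rightarrow> nat \<Rightarrow> tensor" where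
  "T_gen a i j = ket (i - 2) (j + 1) + tscale (complex_of_real (a + 1)) (ket (i - 1) j)
      + tscale (complex_of_real (a + 1)) (ket i (j - 1)) + ket (i + 1) (j - 2)"

definition S_gen :: "real \<Rightarrow> nat \<Rightarrow> nat \<Rightarrow> tensor" where
  "S_gen a i j = ket (i - 1) (j + 1) + tscale (complex_of_real a) (ket i j) + ket (i + 1) (j - 1)"

definition T_space :: "nat \<Rightarrow> nat \<Rightarrow> real \<Rightarrow> tensor set" where
  "T_space m n a = cspan {T_gen a i j | i j. 2 \<le> i \<and> i \<le> m - 2 \<and> 2 \<le> j \<and> j \<le> n - 2}"

definition S_space :: "nat \<Rightarrow> nat \<Rightarrow> real \<Rightarrow> tensor set" where
  "S_space m n a = cspan {S_gen a i j | i j. 1 \<le> i \<and> i \<le> m - 2 \<and> 1 \<le> j \<and> j \<le> n - 2}"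

end

theory Submission
  imports Defs
begin


interpretation tv: vector_space tscale
  by unfold_locales (auto simp: tscale_def algebra_simps fun_eq_iff)

lemma cspan_eq: "cspan S = tv.span S" by (simp add: cspan_def)
lemma cdim_eq: "cdim S = tv.dim S" by (simp add: cdim_def)

definition L :: "(nat \<Rightarrow> real) \<Rightarrow> nat \<Rightarrow> tensor \<Rightarrow> complex" where
  "L \<phi> d M = (\<Sum>q\<le>d. M (d - q) q * complex_of_real (\<phi> q))"

lemma L_add: "L \<phi> d (M + N) = L \<phi> d M + L \<phi> d N"
  by (simp add: L_def algebra_simps sum.distrib)
lemma L_scale: "L \<phi> d (tscale c M) = c * L \<phi> d M"
  by (simp add: L_def tscale_def sum_distrib_left mult.assoc)
lemma L_zero: "L \<phi> d 0 = 0"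
  by (simp add: L_def)

lemma L_ket: "L \<phi> d (ket p q) = (if p + q = d then complex_of_real (\<phi> q) else 0)"
proof -
  have "L \<phi> d (ket p q) = (\<Sum>x\<le>d. if x = q then (if p + q = d then complex_of_real (\<phi> q) else 0) else 0)"
    unfolding L_def by (rule sum.cong) (auto simp: ket_def)
  also have "\<dots> = (if p + q = d then complex_of_real (\<phi> q) else 0)"
    by (simp add: sum.delta)
  finally show ?thesis .
qed

lemma L_span:
  assumes "M \<in> cspan G" "\<And>g. g \<in> G \<Longrightarrow> L \<phi> d g = 0"
  shows "L \<phi> d M = 0"
proof -
  have "tv.subspace {M. L \<phi> d M = 0}"
    by (rule tv.subspaceI) (auto simp: L_add L_scale L_zero)
  hence "tv.span G \<subseteq> {M. L \<phi> d M = 0}"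
    using assms(2) by (intro tv.span_minimal) auto
  thus ?thesis using assms(1) by (auto simp: cspan_eq)
qed



lemma sum_apply2: "(sum F A :: tensor) p q = (\<Sum>a\<in>A. F a p q)"
  by (induction A rule: infinite_finite_induct) auto

lemma rank_lower:
  fixes M :: tensor and \<Phi> :: "(nat \<Rightarrow> real) set" and k r :: nat
  assumes indep: "\<And>J \<gamma>. finite J \<Longrightarrow> card J \<le> k \<Longrightarrow>
       (\<forall>\<phi>\<in>\<Phi>. (\<Sum>j\<in>J. \<gamma> j * complex_of_real (\<phi> j)) = 0) \<Longrightarrow> \<forall>j\<in>J. \<gamma> j = 0"
  and cond: "\<And>\<phi> d. \<phi> \<in> \<Phi> \<Longrightarrow> L \<phi> d M = 0"
  and nz: "M \<noteq> 0"
  and box: "\<And>i j. M i j \<noteq> 0 \<Longrightarrow> i < m \<and> j < n"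
  and dec: "\<forall>i<m. \<forall>j<n. M i j = (\<Sum>l<r. u l i * v l j)"
  shows "k < r"
proof -
  obtain i0 j0 where ij0: "M i0 j0 \<noteq> 0" using nz by (auto simp: fun_eq_iff)
  define P where "P = (\<lambda>d. \<exists>j\<le>d. M (d - j) j \<noteq> 0)"
  define d0 where "d0 = (LEAST d. P d)"
  have "P (i0 + j0)" unfolding P_def using ij0 by (intro exI[of _ j0]) auto
  hence ex: "P d0" unfolding d0_def by (rule LeastI)
  have mn: "M (d - j) j = 0" if "d < d0" "j \<le> d" for d j
    using not_less_Least[OF that(1)[unfolded d0_def]] that(2) unfolding P_def by auto
  define J where "J = {j. j \<le> d0 \<and> M (d0 - j) j \<noteq> 0}"
  have finJ: "finite J" unfolding J_def by auto
  have neJ: "J \<noteq> {}" using ex unfolding J_def P_def by auto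
  have Jsub: "J \<subseteq> {..d0}" unfolding J_def by auto
  have Lsum: "\<forall>\<phi>\<in>\<Phi>. (\<Sum>j\<in>J. M (d0 - j) j * complex_of_real (\<phi> j)) = 0"
  proof
    fix \<phi> assume "\<phi> \<in> \<Phi>"
    hence "L \<phi> d0 M = 0" by (rule cond)
    moreover have "L \<phi> d0 M = (\<Sum>j\<in>J. M (d0 - j) j * complex_of_real (\<phi> j))"
      unfolding L_def by (rule sum.mono_neutral_right) (auto simp: J_def)
    ultimately show "(\<Sum>j\<in>J. M (d0 - j) j * complex_of_real (\<phi> j)) = 0" by simp
  qed
  have cardJ: "k < card J"
  proof (rule ccontr)
    assume "\<not> k < card J"
    hence "\<forall>j\<in>J. M (d0 - j) j = 0" using indep[OF finJ _ Lsum] by simp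
    thus False using neJ unfolding J_def by auto
  qed
  have tri: "M (d0 - j) j' = 0" if "j \<in> J" "j' < j" for j j'
  proof -
    have "j \<le> d0" using that J_def by auto
    hence "M ((d0 - j + j') - j') j' = 0" using that by (intro mn) auto
    thus ?thesis by simp
  qed
  have diag: "M (d0 - j) j \<noteq> 0" if "j \<in> J" for j using that J_def by auto
  define R where "R = (\<lambda>j. (\<lambda>p q. if q \<in> J then M (d0 - j) q else 0) :: tensor)"
  define V where "V = (\<lambda>l. (\<lambda>p q. if q \<in> J then v l q else 0) :: tensor)"
  have injR: "inj_on R J"
  proof (rule inj_onI)
    fix x y assume xy: "x \<in> J" "y \<in> J" "R x = R y"
    show "x = y"
    proof (rule ccontr)
      assume "x \<noteq> y"
      then consider "x < y" | "y < x" by linarith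
      thus False
      proof cases
        case 1
        have "R x 0 x = R y 0 x" using xy by simp
        thus False using tri[OF xy(2) 1] diag[OF xy(1)] xy unfolding R_def by simp
      next
        case 2
        have "R x 0 y = R y 0 y" using xy by simp
        thus False using tri[OF xy(1) 2] diag[OF xy(2)] xy unfolding R_def by simp
      qed
    qed
  qed
  have indR: "tv.independent (R ` J)"
  proof (rule tv.independent_if_scalars_zero)
    show "finite (R ` J)" using finJ by simp
  next
    fix f x assume s: "(\<Sum>x\<in>R ` J. tscale (f x) x) = 0" and x: "x \<in> R ` J"
    have s2: "(\<Sum>j\<in>J. tscale (f (R j)) (R j)) = 0"
      using s sum.reindex[OF injR, of "\<lambda>x. tscale (f x) x"] by simp
    show "f x = 0"
    proof (rule ccontr)
      assume fx: "f x \<noteq> 0"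
      define K where "K = {j\<in>J. f (R j) \<noteq> 0}"
      have finK: "finite K" "K \<noteq> {}" using finJ x fx unfolding K_def by auto
      define js where "js = Min K"
      have jsK: "js \<in> K" using finK unfolding js_def by simp
      have jsmin: "\<And>j. j \<in> K \<Longrightarrow> js \<le> j" using finK unfolding js_def by simp
      have "(\<Sum>j\<in>J. tscale (f (R j)) (R j)) 0 js = (\<Sum>j\<in>J. f (R j) * R j 0 js)"
        by (simp add: sum_apply2 tscale_def)
      also have "\<dots> = (\<Sum>j\<in>J. if j = js then f (R js) * M (d0 - js) js else 0)"
      proof (rule sum.cong)
        fix j assume j: "j \<in> J"
        show "f (R j) * R j 0 js = (if j = js then f (R js) * M (d0 - js) js else 0)"
        proof (cases "j = js")
          case True thus ?thesis using jsK K_def by (simp add: R_def)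
        next
          case False
          then consider "j < js" | "js < j" by linarith
          thus ?thesis
          proof cases
            case 1
            hence "j \<notin> K" using jsmin by force
            thus ?thesis using j 1 by (auto simp: K_def)
          next
            case 2
            thus ?thesis using tri[OF j 2] by (auto simp: R_def)
          qed
        qed
      qed simp
      also have "\<dots> = f (R js) * M (d0 - js) js" using jsK finJ by (simp add: K_def)
      finally have "f (R js) * M (d0 - js) js = 0" using s2 by simp
      thus False using jsK diag by (auto simp: K_def)
    qed
  qed
  have spanR: "R ` J \<subseteq> tv.span (V ` {..<r})"
  proof
    fix y assume "y \<in> R ` J"
    then obtain j where j: "j \<in> J" "y = R j" by auto
    have "R j = (\<Sum>l<r. tscale (u l (d0 - j)) (V l))"
    proof (intro ext)
      fix p q
      show "R j p q = (\<Sum>l<r. tscale (u l (d0 - j)) (V l)) p q"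
      proof (cases "q \<in> J")
        case True
        have "d0 - j < m" using box diag[OF j(1)] by blast
        moreover have "q < n" using box diag[OF True] by blast
        ultimately show ?thesis using True dec by (simp add: R_def V_def sum_apply2 tscale_def)
      qed (simp add: R_def V_def sum_apply2 tscale_def)
    qed
    also have "\<dots> \<in> tv.span (V ` {..<r})"
      by (intro tv.span_sum tv.span_scale tv.span_base) auto
    finally show "y \<in> tv.span (V ` {..<r})" using j by simp
  qed
  have "card (R ` J) \<le> card (V ` {..<r})"
    using tv.independent_span_bound[OF _ indR spanR] by simp
  also have "\<dots> \<le> r" using card_image_le[of "{..<r}" V] by simp
  finally show ?thesis using cardJ card_image[OF injR] by simp
qed



fun F :: "real \<Rightarrow> nat \<Rightarrow> real" where
  "F a 0 = 0" | "F a (Suc 0) = 1" | "F a (Suc (Suc t)) = - a * F a (Suc t) - F a t"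

fun Gq :: "real \<Rightarrow> nat \<Rightarrow> real" where
  "Gq a 0 = 0" | "Gq a (Suc 0) = 1" | "Gq a (Suc (Suc t)) = a * Gq a (Suc t) - Gq a t"

lemma F_casor: "F a j * F a (j + t + 1) - F a (j + t) * F a (j + 1) = - F a t"
proof (induction j)
  case 0 thus ?case by simp
next
  case (Suc j)
  have e1: "F a (Suc j + t + 1) = - a * F a (j + t + 1) - F a (j + t)"
    using F.simps(3)[of a "j + t"] by simp
  have e2: "F a (Suc j + 1) = - a * F a (j + 1) - F a j"
    using F.simps(3)[of a j] by simp
  have "F a (Suc j) * F a (Suc j + t + 1) - F a (Suc j + t) * F a (Suc j + 1)
      = F a j * F a (j + t + 1) - F a (j + t) * F a (j + 1)"
    unfolding e1 e2 by (simp add: algebra_simps)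
  thus ?case using Suc by simp
qed

lemma F_incr: assumes "\<bar>a\<bar> \<ge> 2" shows "\<bar>F a (Suc t)\<bar> - \<bar>F a t\<bar> \<ge> 1"
proof (induction t)
  case 0 thus ?case by simp
next
  case (Suc t)
  have "\<bar>F a (Suc (Suc t))\<bar> = \<bar>a * F a (Suc t) + F a t\<bar>" by (simp add: abs_minus_commute)
  also have "\<dots> \<ge> \<bar>a\<bar> * \<bar>F a (Suc t)\<bar> - \<bar>F a t\<bar>"
    using abs_triangle_ineq4[of "a * F a (Suc t)" "- F a t"] by (simp add: abs_mult)
  finally have "\<bar>F a (Suc (Suc t))\<bar> \<ge> \<bar>a\<bar> * \<bar>F a (Suc t)\<bar> - \<bar>F a t\<bar>" .
  moreover have "\<bar>a\<bar> * \<bar>F a (Suc t)\<bar> \<ge> 2 * \<bar>F a (Suc t)\<bar>"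
    using assms by (intro mult_right_mono) auto
  ultimately show ?case using Suc by linarith
qed

lemma F_ge: assumes "\<bar>a\<bar> \<ge> 2" shows "\<bar>F a t\<bar> \<ge> real t"
proof (induction t)
  case (Suc t) thus ?case using F_incr[OF assms, of t] by simp
qed simp

lemma F_nz: assumes "\<bar>a\<bar> \<ge> 2" "t > 0" shows "F a t \<noteq> 0"
  using F_ge[OF assms(1), of t] assms(2) by auto

lemma F_G: "F a t = (-1) ^ (t + 1) * Gq a t"
proof (induction a t rule: Gq.induct)
  case (3 a t) thus ?case by (simp add: algebra_simps)
qed auto

lemma G_basic: assumes "a > 2" shows "Gq a (Suc t) - Gq a t \<ge> 1 \<and> Gq a t \<ge> real t"
proof (induction t)
  case 0 thus ?case by simp
next
  case (Suc t)
  have g1: "Gq a (Suc t) \<ge> real (Suc t)" using Suc by simp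
  have "Gq a (Suc (Suc t)) - Gq a (Suc t) = (Gq a (Suc t) - Gq a t) + (a - 2) * Gq a (Suc t)"
    by (simp add: algebra_simps)
  moreover have "(a - 2) * Gq a (Suc t) \<ge> 0" using assms g1 by simp
  ultimately show ?case using Suc g1 by linarith
qed

lemma G_delta_mono: assumes "a > 2"
  shows "Gq a (Suc t) - Gq a t < Gq a (Suc (Suc t)) - Gq a (Suc t)"
proof -
  have g1: "Gq a (Suc t) \<ge> 1" using G_basic[OF assms, of "Suc t"] by simp
  have "Gq a (Suc (Suc t)) - Gq a (Suc t) = (Gq a (Suc t) - Gq a t) + (a - 2) * Gq a (Suc t)"
    by (simp add: algebra_simps)
  moreover have "(a - 2) * Gq a (Suc t) > 0" using assms g1 by simp
  ultimately show ?thesis by linarith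
qed

lemma G_delta_less: assumes "a > 2" "s < t"
  shows "Gq a (Suc s) - Gq a s < Gq a (Suc t) - Gq a t"
  using lift_Suc_mono_less[of "\<lambda>t. Gq a (Suc t) - Gq a t", OF G_delta_mono[OF assms(1)] assms(2)] .

lemma G_superadd: assumes "a > 2" "q > 0"
  shows "Gq a (Suc p + q) - Gq a q - Gq a (Suc p) > 0"
proof (induction p)
  case 0
  show ?case using G_delta_less[OF assms(1), of 0 q] assms(2) by simp
next
  case (Suc p)
  have "Gq a (Suc p + 1 + q) - Gq a (Suc p + q) > Gq a (Suc (Suc p)) - Gq a (Suc p)"
    using G_delta_less[OF assms(1), of "Suc p" "Suc p + q"] assms(2) by simp
  thus ?case using Suc by simp
qed

lemma K_nz: assumes "a > 2" "p > 0" "q > 0"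
  shows "F a (p + q) * (-1) ^ p - F a q - F a p * (-1) ^ (p + q) \<noteq> 0"
proof -
  obtain p' where p': "p = Suc p'" using assms(2) gr0_implies_Suc by blast
  have pp: "((-1::real) ^ p) * (-1) ^ p = 1"
    by (metis power_add[symmetric] mult_2[symmetric] power_mult power_one neg_one_even_power even_mult_iff even_numeral)
  have "F a (p + q) * (-1) ^ p - F a q - F a p * (-1) ^ (p + q)
     = (-1) ^ (q + 1) * (Gq a (p + q) - Gq a q - Gq a p)"
    unfolding F_G power_add using pp by (simp add: algebra_simps)
  moreover have "Gq a (p + q) - Gq a q - Gq a p > 0" using G_superadd[OF assms(1) assms(3), of p'] p' by simp
  ultimately show ?thesis by simp
qed



abbreviation cr :: "real \<Rightarrow> complex" where "cr \<equiv> complex_of_real"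

lemma two_sol:
  assumes a: "\<bar>a\<bar> \<ge> 2" and xy: "x < y"
  and e1: "g1 * cr (F a x) + g2 * cr (F a y) = 0"
  and e2: "g1 * cr (F a (Suc x)) + g2 * cr (F a (Suc y)) = 0"
  shows "g1 = 0 \<and> g2 = 0"
proof -
  obtain t where t: "y = x + t" "t > 0" using xy by (metis less_imp_add_positive)
  have "g1 * cr (F a x * F a (x + t + 1) - F a (x + t) * F a (x + 1))
     = cr (F a (Suc y)) * (g1 * cr (F a x) + g2 * cr (F a y)) - cr (F a y) * (g1 * cr (F a (Suc x)) + g2 * cr (F a (Suc y)))"
    using t by (simp add: algebra_simps)
  also have "\<dots> = 0" using e1 e2 by simp
  finally have "g1 * cr (F a t) = 0" unfolding F_casor by simp
  hence g1: "g1 = 0" using F_nz[OF a t(2)] by simp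
  hence "g2 * cr (F a (Suc y)) = 0" using e2 by simp
  hence "g2 = 0" using F_nz[OF a, of "Suc y"] by simp
  thus ?thesis using g1 by simp
qed

lemma indepS:
  assumes a: "\<bar>a\<bar> \<ge> 2" and fin: "finite J" and c: "card J \<le> 2"
  and e: "\<forall>\<phi>\<in>{F a, \<lambda>j. F a (Suc j)}. (\<Sum>j\<in>J. \<gamma> j * cr (\<phi> j)) = 0"
  shows "\<forall>j\<in>J. \<gamma> j = 0"
proof -
  have e1: "(\<Sum>j\<in>J. \<gamma> j * cr (F a j)) = 0" and e2: "(\<Sum>j\<in>J. \<gamma> j * cr (F a (Suc j))) = 0"
    using e by auto
  consider "card J = 0" | "card J = 1" | "card J = 2" using c by linarith
  thus ?thesis
  proof cases
    case 1 thus ?thesis using fin by simp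
  next
    case 2
    then obtain x where J: "J = {x}" by (auto simp: card_1_singleton_iff)
    have "\<gamma> x * cr (F a (Suc x)) = 0" using e2 J by simp
    thus ?thesis using F_nz[OF a, of "Suc x"] J by simp
  next
    case 3
    then obtain x y where J: "J = {x, y}" "x \<noteq> y" by (auto simp: card_2_iff)
    show ?thesis
    proof (cases "x < y")
      case True
      thus ?thesis using two_sol[OF a True, of "\<gamma> x" "\<gamma> y"] e1 e2 J by simp
    next
      case False
      hence yx: "y < x" using J by simp
      thus ?thesis using two_sol[OF a yx, of "\<gamma> y" "\<gamma> x"] e1 e2 J by (simp add: add.commute)
    qed
  qed
qed

lemma three_sol:
  assumes a: "a > 2" and xy: "x < y" and yz: "y < z"
  and e1: "g1 * cr (F a x) + g2 * cr (F a y) + g3 * cr (F a z) = 0"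
  and e2: "g1 * cr (F a (Suc x)) + g2 * cr (F a (Suc y)) + g3 * cr (F a (Suc z)) = 0"
  and e3: "g1 * cr ((-1) ^ x) + g2 * cr ((-1) ^ y) + g3 * cr ((-1) ^ z) = 0"
  shows "g1 = 0 \<and> g2 = 0 \<and> g3 = 0"
proof -
  have a2: "\<bar>a\<bar> \<ge> 2" using a by simp
  obtain p where p: "y = x + p" "p > 0" using xy by (metis less_imp_add_positive)
  obtain q where q: "z = y + q" "q > 0" using yz by (metis less_imp_add_positive)
  define A where "A = F a p"
  define B where "B = F a q"
  define C where "C = F a (p + q)"
  have cas1: "F a x * F a (z + 1) - F a z * F a (x + 1) = - C"
    using F_casor[of a x "p + q"] p q by (simp add: C_def add.assoc)
  have cas2: "F a y * F a (z + 1) - F a z * F a (y + 1) = - B"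
    using F_casor[of a y q] q by (simp add: B_def)
  have cas3: "F a x * F a (y + 1) - F a y * F a (x + 1) = - A"
    using F_casor[of a x p] p by (simp add: A_def)
  have "g1 * cr (F a x * F a (z + 1) - F a z * F a (x + 1)) + g2 * cr (F a y * F a (z + 1) - F a z * F a (y + 1))
     = cr (F a (Suc z)) * (g1 * cr (F a x) + g2 * cr (F a y) + g3 * cr (F a z))
       - cr (F a z) * (g1 * cr (F a (Suc x)) + g2 * cr (F a (Suc y)) + g3 * cr (F a (Suc z)))"
    by (simp add: algebra_simps)
  also have "\<dots> = 0" using e1 e2 by simp
  finally have "g1 * cr (- C) + g2 * cr (- B) = 0" unfolding cas1 cas2 .
  moreover have "g1 * cr C + g2 * cr B = - (g1 * cr (- C) + g2 * cr (- B))" by simp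
  ultimately have c1: "g1 * cr C + g2 * cr B = 0" by simp
  have "g2 * cr (F a x * F a (y + 1) - F a y * F a (x + 1)) + g3 * cr (F a x * F a (z + 1) - F a z * F a (x + 1))
     = cr (F a x) * (g1 * cr (F a (Suc x)) + g2 * cr (F a (Suc y)) + g3 * cr (F a (Suc z)))
       - cr (F a (Suc x)) * (g1 * cr (F a x) + g2 * cr (F a y) + g3 * cr (F a z))"
    by (simp add: algebra_simps)
  also have "\<dots> = 0" using e1 e2 by simp
  finally have "g2 * cr (- A) + g3 * cr (- C) = 0" unfolding cas1 cas3 .
  moreover have "g2 * cr A + g3 * cr C = - (g2 * cr (- A) + g3 * cr (- C))" by simp
  ultimately have c2: "g2 * cr A + g3 * cr C = 0" by simp
  define s where "s = ((-1::real) ^ x)"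
  define sp where "sp = ((-1::real) ^ p)"
  define sq where "sq = ((-1::real) ^ (p + q))"
  have sy: "(-1::real) ^ y = s * sp" using p by (simp add: power_add s_def sp_def)
  have sz: "(-1::real) ^ z = s * sq" using p q by (simp add: power_add s_def sq_def add.assoc)
  have e3': "g1 * cr s + g2 * cr (s * sp) + g3 * cr (s * sq) = 0" using e3 unfolding sy sz s_def .
  have "g2 * cr (s * (C * sp - B - A * sq))
      = cr C * (g1 * cr s + g2 * cr (s * sp) + g3 * cr (s * sq))
        - cr s * (g1 * cr C + g2 * cr B)
        - cr (s * sq) * (g2 * cr A + g3 * cr C)"
    by (simp add: algebra_simps)
  also have "\<dots> = 0" using e3' c1 c2 by simp
  finally have "g2 * cr (s * (C * sp - B - A * sq)) = 0" .
  moreover have "s \<noteq> 0" unfolding s_def by simp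
  moreover have "C * sp - B - A * sq \<noteq> 0"
    using K_nz[OF a p(2) q(2)] unfolding A_def B_def C_def sp_def sq_def .
  ultimately have "s * (C * sp - B - A * sq) \<noteq> 0" "g2 * cr (s * (C * sp - B - A * sq)) = 0" by simp_all
  hence g2: "g2 = 0" by (metis mult_eq_0_iff of_real_eq_0_iff)
  have Cnz: "C \<noteq> 0" unfolding C_def using F_nz[OF a2, of "p + q"] p by simp
  have "g1 = 0" using c1 g2 Cnz by simp
  moreover have "g3 = 0" using c2 g2 Cnz by simp
  ultimately show ?thesis using g2 by simp
qed

lemma indepT:
  assumes a: "a > 2" and fin: "finite J" and c: "card J \<le> 3"
  and e: "\<forall>\<phi>\<in>{F a, \<lambda>j. F a (Suc j), \<lambda>j. (-1) ^ j}. (\<Sum>j\<in>J. \<gamma> j * cr (\<phi> j)) = 0"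
  shows "\<forall>j\<in>J. \<gamma> j = 0"
proof -
  have a2: "\<bar>a\<bar> \<ge> 2" using a by simp
  have e1: "(\<Sum>j\<in>J. \<gamma> j * cr (F a j)) = 0" and e2: "(\<Sum>j\<in>J. \<gamma> j * cr (F a (Suc j))) = 0"
    and e3: "(\<Sum>j\<in>J. \<gamma> j * cr ((-1) ^ j)) = 0"
    using e by auto
  consider "card J \<le> 2" | "card J = 3" using c by linarith
  thus ?thesis
  proof cases
    case 1 thus ?thesis using indepS[OF a2 fin 1] e by auto
  next
    case 2
    then obtain x y z where J: "J = {x, y, z}" "x \<noteq> y" "y \<noteq> z" "x \<noteq> z" by (auto simp: card_3_iff)
    have key: "\<gamma> u = 0 \<and> \<gamma> v = 0 \<and> \<gamma> w = 0" if "u < v" "v < w" "J = {u, v, w}" for u v w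
      using three_sol[OF a that(1) that(2), of "\<gamma> u" "\<gamma> v" "\<gamma> w"] e1 e2 e3 that
      by (simp add: add.assoc)
    consider "x < y" "y < z" | "x < z" "z < y" | "y < x" "x < z" | "y < z" "z < x" | "z < x" "x < y" | "z < y" "y < x"
      using J by linarith
    thus ?thesis
    proof cases
      case 1 thus ?thesis using key[of x y z] J by auto
    next
      case 2 thus ?thesis using key[of x z y] J by (auto simp: insert_commute)
    next
      case 3 thus ?thesis using key[of y x z] J by (auto simp: insert_commute)
    next
      case 4 thus ?thesis using key[of y z x] J by (auto simp: insert_commute)
    next
      case 5 thus ?thesis using key[of z x y] J by (auto simp: insert_commute)
    next
      case 6 thus ?thesis using key[of z y x] J by (auto simp: insert_commute)
    qed
  qed
qed



lemma sr_lower: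
  fixes M :: tensor and \<Phi> :: "(nat \<Rightarrow> real) set" and k :: nat
  assumes indep: "\<And>J \<gamma>. finite J \<Longrightarrow> card J \<le> k \<Longrightarrow>
       (\<forall>\<phi>\<in>\<Phi>. (\<Sum>j\<in>J. \<gamma> j * complex_of_real (\<phi> j)) = 0) \<Longrightarrow> \<forall>j\<in>J. \<gamma> j = 0"
  and cond: "\<And>\<phi> d. \<phi> \<in> \<Phi> \<Longrightarrow> L \<phi> d M = 0"
  and nz: "M \<noteq> 0"
  and box: "\<And>i j. M i j \<noteq> 0 \<Longrightarrow> i < m \<and> j < n"
  shows "k < schmidt_rank m n M"
proof -
  let ?P = "\<lambda>r. \<exists>u v :: nat \<Rightarrow> nat \<Rightarrow> complex. \<forall>i<m. \<forall>j<n. M i j = (\<Sum>l<r. u l i * v l j)"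
  have "\<forall>i<m. \<forall>j<n. M i j = (\<Sum>l<m. (if l = i then 1 else 0) * M l j)"
  proof (intro allI impI)
    fix i j assume "i < m" "j < n"
    have "(\<Sum>l<m. (if l = i then 1 else 0) * M l j) = (\<Sum>l<m. if l = i then M l j else 0)"
      by (rule sum.cong) auto
    also have "\<dots> = M i j" using \<open>i < m\<close> by simp
    finally show "M i j = (\<Sum>l<m. (if l = i then 1 else 0) * M l j)" by simp
  qed
  hence "?P m" by (intro exI[of _ "\<lambda>l i. if l = i then 1 else 0"] exI[of _ "\<lambda>l j. M l j"]) simp
  hence "?P (Least ?P)" by (rule LeastI)
  then obtain u v where dec: "\<forall>i<m. \<forall>j<n. M i j = (\<Sum>l<schmidt_rank m n M. u l i * v l j)"
    unfolding schmidt_rank_def by blast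
  show ?thesis by (rule rank_lower[OF indep cond nz box dec]) auto
qed

lemma box_span:
  assumes "M \<in> cspan G" "\<And>g i j. g \<in> G \<Longrightarrow> g i j \<noteq> 0 \<Longrightarrow> i < m \<and> j < n"
  shows "M i j \<noteq> 0 \<Longrightarrow> i < m \<and> j < n"
proof -
  have "tv.subspace {M. \<forall>i j. \<not> (i < m \<and> j < n) \<longrightarrow> M i j = 0}"
    by (rule tv.subspaceI) (auto simp: tscale_def)
  moreover have "G \<subseteq> {M. \<forall>i j. \<not> (i < m \<and> j < n) \<longrightarrow> M i j = 0}"
    using assms(2) by blast
  ultimately have "tv.span G \<subseteq> {M. \<forall>i j. \<not> (i < m \<and> j < n) \<longrightarrow> M i j = 0}"
    by (intro tv.span_minimal)
  thus "M i j \<noteq> 0 \<Longrightarrow> i < m \<and> j < n" using assms(1) by (auto simp: cspan_eq)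
qed

lemma S_gen_nz: "S_gen a i j p q \<noteq> 0 \<Longrightarrow> (p = i - 1 \<and> q = j + 1) \<or> (p = i \<and> q = j) \<or> (p = i + 1 \<and> q = j - 1)"
  by (auto simp: S_gen_def ket_def tscale_def split: if_splits)

lemma T_gen_nz: "T_gen a i j p q \<noteq> 0 \<Longrightarrow> (p = i - 2 \<and> q = j + 1) \<or> (p = i - 1 \<and> q = j) \<or> (p = i \<and> q = j - 1) \<or> (p = i + 1 \<and> q = j - 2)"
  by (auto simp: T_gen_def ket_def tscale_def split: if_splits)

lemma T_gen_split: "2 \<le> i \<Longrightarrow> 2 \<le> j \<Longrightarrow> T_gen a i j = S_gen a i (j - 1) + S_gen a (i - 1) j"
  by (auto simp: T_gen_def S_gen_def ket_def tscale_def fun_eq_iff algebra_simps)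

lemma L_S_gen: "1 \<le> i \<Longrightarrow> 1 \<le> j \<Longrightarrow> L \<phi> d (S_gen a i j) =
   (if i + j = d then cr (\<phi> (j + 1)) + cr a * cr (\<phi> j) + cr (\<phi> (j - 1)) else 0)"
  by (simp add: S_gen_def L_add L_scale L_ket)

lemma tri_indep:
  fixes g :: "nat \<times> nat \<Rightarrow> tensor"
  assumes fin: "finite I" and piv: "\<And>x. x \<in> I \<Longrightarrow> g x (pa x) (pb x) = 1"
  and ord: "\<And>x y. x \<in> I \<Longrightarrow> y \<in> I \<Longrightarrow> g y (pa x) (pb x) \<noteq> 0 \<Longrightarrow> y = x \<or> fst x < fst y"
  and s: "(\<Sum>x\<in>I. tscale (c x) (g x)) = 0"
  shows "\<forall>x\<in>I. c x = 0"
proof (rule ccontr)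
  assume "\<not> (\<forall>x\<in>I. c x = 0)"
  define K where "K = {x\<in>I. c x \<noteq> 0}"
  have K: "finite K" "K \<noteq> {}" using fin \<open>\<not> (\<forall>x\<in>I. c x = 0)\<close> unfolding K_def by auto
  define mx where "mx = Max (fst ` K)"
  have "mx \<in> fst ` K" using K unfolding mx_def by simp
  then obtain x where x: "x \<in> K" "fst x = mx" by auto
  have xmax: "\<And>y. y \<in> K \<Longrightarrow> fst y \<le> fst x" using K x unfolding mx_def by simp
  have xI: "x \<in> I" "c x \<noteq> 0" using x K_def by auto
  have "0 = (\<Sum>y\<in>I. tscale (c y) (g y)) (pa x) (pb x)" using s by simp
  also have "\<dots> = (\<Sum>y\<in>I. c y * g y (pa x) (pb x))" by (simp add: sum_apply2 tscale_def)
  also have "\<dots> = (\<Sum>y\<in>I. if y = x then c x else 0)"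
  proof (rule sum.cong)
    fix y assume y: "y \<in> I"
    show "c y * g y (pa x) (pb x) = (if y = x then c x else 0)"
    proof (cases "y = x")
      case True thus ?thesis using piv[OF xI(1)] by simp
    next
      case False
      show ?thesis
      proof (cases "g y (pa x) (pb x) = 0")
        case False
        hence "fst x < fst y" using ord[OF xI(1) y] \<open>y \<noteq> x\<close> by auto
        have "y \<notin> K"
        proof
          assume "y \<in> K"
          hence "fst y \<le> fst x" by (rule xmax)
          thus False using \<open>fst x < fst y\<close> by simp
        qed
        thus ?thesis using y \<open>y \<noteq> x\<close> by (simp add: K_def)
      qed (simp add: \<open>y \<noteq> x\<close>)
    qed
  qed simp
  also have "\<dots> = c x" using xI fin by simp
  finally show False using xI by simp
qed

lemma tri_dim:
  fixes g :: "nat \<times> nat \<Rightarrow> tensor"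
  assumes fin: "finite I" and piv: "\<And>x. x \<in> I \<Longrightarrow> g x (pa x) (pb x) = 1"
  and ord: "\<And>x y. x \<in> I \<Longrightarrow> y \<in> I \<Longrightarrow> g y (pa x) (pb x) \<noteq> 0 \<Longrightarrow> y = x \<or> fst x < fst y"
  shows "cdim (cspan (g ` I)) = card I"
proof -
  have inj: "inj_on g I"
  proof (rule inj_onI)
    fix x y assume xy: "x \<in> I" "y \<in> I" "g x = g y"
    have "g y (pa x) (pb x) \<noteq> 0" using piv[OF xy(1)] xy(3) by simp
    hence 1: "y = x \<or> fst x < fst y" using ord xy by blast
    have "g x (pa y) (pb y) \<noteq> 0" using piv[OF xy(2)] xy(3) by simp
    hence "x = y \<or> fst y < fst x" using ord xy by blast
    thus "x = y" using 1 by auto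
  qed
  have "tv.independent (g ` I)"
  proof (rule tv.independent_if_scalars_zero)
    show "finite (g ` I)" using fin by simp
  next
    fix f v assume s: "(\<Sum>v\<in>g ` I. tscale (f v) v) = 0" and v: "v \<in> g ` I"
    have "(\<Sum>x\<in>I. tscale ((f \<circ> g) x) (g x)) = 0"
      using s sum.reindex[OF inj, of "\<lambda>v. tscale (f v) v"] by simp
    hence "\<forall>x\<in>I. (f \<circ> g) x = 0"
      using tri_indep[where g=g and pa=pa and pb=pb and I=I and c="f \<circ> g"] fin piv ord by blast
    thus "f v = 0" using v by auto
  qed
  hence "tv.dim (tv.span (g ` I)) = card (g ` I)" by (rule tv.dim_span_eq_card_independent)
  thus ?thesis using card_image[OF inj] by (simp add: cdim_eq cspan_eq)
qed



lemma F_rec: "F a (Suc (Suc t)) + a * F a (Suc t) + F a t = 0" by simp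

lemma F_rec_c: "cr (F a (Suc (Suc t))) + cr a * cr (F a (Suc t)) + cr (F a t) = 0"
proof -
  have "cr (F a (Suc (Suc t)) + a * F a (Suc t) + F a t) = 0" using F_rec[of a t] by simp
  thus ?thesis by simp
qed

lemma S_set_eq: "{S_gen a i j |i j. 1 \<le> i \<and> i \<le> m - 2 \<and> 1 \<le> j \<and> j \<le> n - 2}
   = (\<lambda>(i, j). S_gen a i j) ` ({1..m-2} \<times> {1..n-2})"
  by auto blast

lemma T_set_eq: "{T_gen a i j |i j. 2 \<le> i \<and> i \<le> m - 2 \<and> 2 \<le> j \<and> j \<le> n - 2}
   = (\<lambda>(i, j). T_gen a i j) ` ({2..m-2} \<times> {2..n-2})"
  by auto blast

theorem theorem5p8:
  fixes m n :: nat and a :: real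
  assumes "min m n \<ge> 4"
  shows "T_space m n a \<subseteq> S_space m n a
    \<and> (\<bar>a\<bar> \<ge> 2 \<longrightarrow>
           (\<forall>psi \<in> S_space m n a. psi \<noteq> 0 \<longrightarrow> \<not> schmidt_rank m n psi \<le> 2)
           \<and> cdim (S_space m n a) = (m - 2) * (n - 2))
    \<and> (a > 4 \<longrightarrow>
           (\<forall>psi \<in> T_space m n a. psi \<noteq> 0 \<longrightarrow> \<not> schmidt_rank m n psi \<le> 3)
           \<and> cdim (T_space m n a) = (m - 3) * (n - 3))
    \<and> (a > 4 \<longrightarrow>
           (\<exists>psi \<in> S_space m n a - T_space m n a. schmidt_rank m n psi = 3))"
proof -
  have m4: "m \<ge> 4" and n4: "n \<ge> 4" using assms by auto
  define Sset where "Sset = {S_gen a i j |i j. 1 \<le> i \<and> i \<le> m - 2 \<and> 1 \<le> j \<and> j \<le> n - 2}"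
  define Tset where "Tset = {T_gen a i j |i j. 2 \<le> i \<and> i \<le> m - 2 \<and> 2 \<le> j \<and> j \<le> n - 2}"
  have Sdef: "S_space m n a = cspan Sset" unfolding Sset_def S_space_def ..
  have Tdef: "T_space m n a = cspan Tset" unfolding Tset_def T_space_def ..
  define \<psi> where "\<psi> = (\<lambda>j::nat. (-1::real) ^ j)"
  have TS: "T_space m n a \<subseteq> S_space m n a"
  proof -
    have "Tset \<subseteq> tv.span Sset"
    proof
      fix x assume "x \<in> Tset"
      then obtain i j where ij: "x = T_gen a i j" "2 \<le> i" "i \<le> m - 2" "2 \<le> j" "j \<le> n - 2"
        unfolding Tset_def by blast
      have "S_gen a i (j - 1) \<in> Sset" "S_gen a (i - 1) j \<in> Sset"
        unfolding Sset_def using ij by (fastforce intro!: exI)+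
      hence "S_gen a i (j - 1) + S_gen a (i - 1) j \<in> tv.span Sset"
        by (intro tv.span_add tv.span_base)
      thus "x \<in> tv.span Sset" using ij T_gen_split by simp
    qed
    hence "tv.span Tset \<subseteq> tv.span Sset" by (intro tv.span_minimal) auto
    thus ?thesis by (simp add: Sdef Tdef cspan_eq)
  qed
  have Sbox: "\<And>M i j. M \<in> S_space m n a \<Longrightarrow> M i j \<noteq> 0 \<Longrightarrow> i < m \<and> j < n"
  proof -
    fix M i j assume M: "M \<in> S_space m n a" and nz: "M i j \<noteq> 0"
    show "i < m \<and> j < n"
    proof (rule box_span[OF M[unfolded Sdef] _ nz])
      fix g p q assume g: "g \<in> Sset" and gnz: "g p q \<noteq> 0"
      then obtain i' j' where ij: "g = S_gen a i' j'" "1 \<le> i'" "i' \<le> m - 2" "1 \<le> j'" "j' \<le> n - 2"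
        unfolding Sset_def by blast
      show "p < m \<and> q < n" using S_gen_nz[of a i' j' p q] gnz ij m4 n4 by auto
    qed
  qed
  have SL: "\<And>M d. M \<in> S_space m n a \<Longrightarrow> L (F a) d M = 0 \<and> L (\<lambda>j. F a (Suc j)) d M = 0"
  proof -
    fix M d assume M: "M \<in> S_space m n a"
    have gen: "L (F a) d g = 0 \<and> L (\<lambda>j. F a (Suc j)) d g = 0" if gin: "g \<in> Sset" for g
    proof -
      obtain i j where ij: "g = S_gen a i j" "1 \<le> i" "1 \<le> j"
        using gin unfolding Sset_def by blast
      obtain j' where j': "j = Suc j'" using ij(3) by (cases j) auto
      show ?thesis using ij j' F_rec_c[of a j'] F_rec_c[of a "Suc j'"]
        by (simp add: L_S_gen)
    qed
    show "L (F a) d M = 0 \<and> L (\<lambda>j. F a (Suc j)) d M = 0"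
      using L_span[OF M[unfolded Sdef], of "F a" d] L_span[OF M[unfolded Sdef], of "\<lambda>j. F a (Suc j)" d] gen
      by blast
  qed
  have TL: "\<And>M d. M \<in> T_space m n a \<Longrightarrow> L \<psi> d M = 0"
  proof -
    fix M d assume M: "M \<in> T_space m n a"
    have gen: "L \<psi> d g = 0" if gin: "g \<in> Tset" for g
    proof -
      obtain i j where ij: "g = T_gen a i j" "2 \<le> i" "2 \<le> j"
        using gin unfolding Tset_def by blast
      obtain j' where j': "j = Suc (Suc j')" using ij(3) by (metis add_2_eq_Suc le_Suc_ex add.commute)
      obtain i' where i': "i = Suc (Suc i')" using ij(2) by (metis add_2_eq_Suc le_Suc_ex add.commute)
      have "L \<psi> d g = L \<psi> d (S_gen a i (j - 1)) + L \<psi> d (S_gen a (i - 1) j)"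
        using ij T_gen_split L_add by simp
      also have "\<dots> = 0" using i' j' by (simp add: L_S_gen \<psi>_def algebra_simps)
      finally show ?thesis .
    qed
    show "L \<psi> d M = 0" using L_span[OF M[unfolded Tdef]] gen by blast
  qed
  have P2rank: "\<forall>psi \<in> S_space m n a. psi \<noteq> 0 \<longrightarrow> \<not> schmidt_rank m n psi \<le> 2" if a2: "\<bar>a\<bar> \<ge> 2"
  proof (intro ballI impI)
    fix psi assume psi: "psi \<in> S_space m n a" "psi \<noteq> 0"
    have "2 < schmidt_rank m n psi"
    proof (rule sr_lower[where \<Phi> = "{F a, \<lambda>j. F a (Suc j)}"])
      show "\<And>J \<gamma>. finite J \<Longrightarrow> card J \<le> 2 \<Longrightarrow>
       (\<forall>\<phi>\<in>{F a, \<lambda>j. F a (Suc j)}. (\<Sum>j\<in>J. \<gamma> j * cr (\<phi> j)) = 0) \<Longrightarrow> \<forall>j\<in>J. \<gamma> j = 0"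
        using indepS[OF a2] by blast
      show "\<And>\<phi> d. \<phi> \<in> {F a, \<lambda>j. F a (Suc j)} \<Longrightarrow> L \<phi> d psi = 0" using SL[OF psi(1)] by blast
      show "psi \<noteq> 0" by (rule psi(2))
      show "\<And>i j. psi i j \<noteq> 0 \<Longrightarrow> i < m \<and> j < n" using Sbox[OF psi(1)] by blast
    qed
    thus "\<not> schmidt_rank m n psi \<le> 2" by simp
  qed
  have P2dim: "cdim (S_space m n a) = (m - 2) * (n - 2)"
  proof -
    have "cdim (cspan ((\<lambda>(i, j). S_gen a i j) ` ({1..m-2} \<times> {1..n-2}))) = card ({1..m-2} \<times> {1..n-2})"
    proof (rule tri_dim[where pa = "\<lambda>(i, j). i + 1" and pb = "\<lambda>(i, j). j - 1"])
      show "finite ({1..m-2} \<times> {1..n-2})" by simp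
    next
      fix x assume "x \<in> {1..m-2} \<times> {1..n-2}"
      thus "(case x of (i, j) \<Rightarrow> S_gen a i j) ((case x of (i, j) \<Rightarrow> i + 1)) ((case x of (i, j) \<Rightarrow> j - 1)) = 1"
        by (auto simp: S_gen_def ket_def tscale_def)
    next
      fix x y assume x: "x \<in> {1..m-2} \<times> {1..n-2}" and y: "y \<in> {1..m-2} \<times> {1..n-2}"
        and nz: "(case y of (i, j) \<Rightarrow> S_gen a i j) ((case x of (i, j) \<Rightarrow> i + 1)) ((case x of (i, j) \<Rightarrow> j - 1)) \<noteq> 0"
      obtain i j i' j' where xy: "x = (i, j)" "y = (i', j')" by (cases x, cases y) auto
      show "y = x \<or> fst x < fst y"
        using S_gen_nz[of a i' j' "i + 1" "j - 1"] nz x y xy by auto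
    qed
    thus ?thesis unfolding S_space_def S_set_eq by simp
  qed
  have P3rank: "\<forall>psi \<in> T_space m n a. psi \<noteq> 0 \<longrightarrow> \<not> schmidt_rank m n psi \<le> 3" if a4: "a > 4"
  proof (intro ballI impI)
    fix psi assume psi: "psi \<in> T_space m n a" "psi \<noteq> 0"
    have psiS: "psi \<in> S_space m n a" using psi TS by blast
    have a2: "a > 2" using a4 by simp
    have "3 < schmidt_rank m n psi"
    proof (rule sr_lower[where \<Phi> = "{F a, \<lambda>j. F a (Suc j), \<psi>}"])
      show "\<And>J \<gamma>. finite J \<Longrightarrow> card J \<le> 3 \<Longrightarrow>
       (\<forall>\<phi>\<in>{F a, \<lambda>j. F a (Suc j), \<psi>}. (\<Sum>j\<in>J. \<gamma> j * cr (\<phi> j)) = 0) \<Longrightarrow> \<forall>j\<in>J. \<gamma> j = 0"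
        using indepT[OF a2] unfolding \<psi>_def by blast
      show "\<And>\<phi> d. \<phi> \<in> {F a, \<lambda>j. F a (Suc j), \<psi>} \<Longrightarrow> L \<phi> d psi = 0"
        using SL[OF psiS] TL[OF psi(1)] by blast
      show "psi \<noteq> 0" by (rule psi(2))
      show "\<And>i j. psi i j \<noteq> 0 \<Longrightarrow> i < m \<and> j < n" using Sbox[OF psiS] by blast
    qed
    thus "\<not> schmidt_rank m n psi \<le> 3" by simp
  qed
  have P3dim: "cdim (T_space m n a) = (m - 3) * (n - 3)"
  proof -
    have "cdim (cspan ((\<lambda>(i, j). T_gen a i j) ` ({2..m-2} \<times> {2..n-2}))) = card ({2..m-2} \<times> {2..n-2})"
    proof (rule tri_dim[where pa = "\<lambda>(i, j). i + 1" and pb = "\<lambda>(i, j). j - 2"])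
      show "finite ({2..m-2} \<times> {2..n-2})" by simp
    next
      fix x assume "x \<in> {2..m-2} \<times> {2..n-2}"
      thus "(case x of (i, j) \<Rightarrow> T_gen a i j) ((case x of (i, j) \<Rightarrow> i + 1)) ((case x of (i, j) \<Rightarrow> j - 2)) = 1"
        by (auto simp: T_gen_def ket_def tscale_def)
    next
      fix x y assume x: "x \<in> {2..m-2} \<times> {2..n-2}" and y: "y \<in> {2..m-2} \<times> {2..n-2}"
        and nz: "(case y of (i, j) \<Rightarrow> T_gen a i j) ((case x of (i, j) \<Rightarrow> i + 1)) ((case x of (i, j) \<Rightarrow> j - 2)) \<noteq> 0"
      obtain i j i' j' where xy: "x = (i, j)" "y = (i', j')" by (cases x, cases y) auto
      show "y = x \<or> fst x < fst y"
        using T_gen_nz[of a i' j' "i + 1" "j - 2"] nz x y xy by auto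
    qed
    moreover have "card ({2..m-2} \<times> {2..n-2}) = (m - 3) * (n - 3)"
      using m4 n4 by (simp add: card_cartesian_product)
    ultimately show ?thesis unfolding T_space_def T_set_eq by simp
  qed
  have P4: "\<exists>psi \<in> S_space m n a - T_space m n a. schmidt_rank m n psi = 3" if a4: "a > 4"
  proof -
    define g where "g = S_gen a 1 1"
    have gS: "g \<in> S_space m n a" unfolding g_def Sdef cspan_eq Sset_def
      using m4 n4 by (intro tv.span_base) (auto intro!: exI[of _ "1::nat"])
    have "L \<psi> 2 g = cr (1 - a + 1)" unfolding g_def by (simp add: L_S_gen \<psi>_def)
    moreover have "1 - a + 1 \<noteq> 0" using a4 by simp
    ultimately have "L \<psi> 2 g \<noteq> 0" by (metis of_real_eq_0_iff)
    hence gT: "g \<notin> T_space m n a" using TL by blast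
    have g0: "g 0 2 = 1" unfolding g_def by (simp add: S_gen_def ket_def tscale_def)
    hence gnz: "g \<noteq> 0" by auto
    have "\<not> schmidt_rank m n g \<le> 2" using P2rank a4 gS gnz by auto
    moreover have "schmidt_rank m n g \<le> 3"
    proof -
      define u :: "nat \<Rightarrow> nat \<Rightarrow> complex" where "u = (\<lambda>l p::nat. if p = l then (1::complex) else 0)"
      define v :: "nat \<Rightarrow> nat \<Rightarrow> complex" where "v = (\<lambda>l q. if l = 0 then (if q = 2 then (1::complex) else 0)
           else if l = 1 then (if q = 1 then cr a else 0) else (if q = 0 then 1 else 0))"
      have "\<forall>i<m. \<forall>j<n. g i j = (\<Sum>l<3. u l i * v l j)"
        unfolding g_def u_def v_def
        by (auto simp: S_gen_def ket_def tscale_def numeral_3_eq_3 lessThan_Suc)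
      thus ?thesis unfolding schmidt_rank_def by (intro Least_le) blast
    qed
    ultimately have "schmidt_rank m n g = 3" by simp
    thus ?thesis using gS gT by blast
  qed
  show ?thesis using TS P2rank P2dim P3rank P3dim P4 by blast
qed


end
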